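(* Every equivalence class of the free set-operad $\mathcal{G}_4$ modulo the congruence generated by the eight relations below contains exactly one canonical tree. (In particular the canonical trees with $n$ leaves are in bijection with $\mathcal{GR}_4(n)$.)
   Context: $\mathcal{G}_4$ is the free set-operad on four binary generators $\prec$, $\mu$, $\succ$, $\odot$ (the paper denotes $\mu$ by a circle). Its elements of arity $n$ are planar binary trees with $n$ leaves whose internal nodes are labelled by generators; for generators $a,b$, $a\circ_1 b$ is the tree with root $a$ whose left child is an internal node $b$, and $a\circ_2 b$ the tree with root $a$ whose right child is an internal node $b$. $\mathcal{GR}_4$ is the quotient of $\mathcal{G}_4$ by the smallest operad congruence containing the eight relations $\prec\circ_1\succ=\succ\circ_2\prec$, $\mu\circ_1\mu=\mu\circ_2\mu$, $\mu\circ_1\succ=\succ\circ_2\mu$, $\mu\circ_1\prec=\mu\circ_2\succ$, $\prec\circ_1\mu=\mu\circ_2\prec$, $\odot\circ_1\odot=\odot\circ_2\odot$, $\prec\circ_1\prec=\prec\circ_2\odot$, $\succ\circ_1\odot=\succ\circ_2\succ$ (in algebra notation: $(x\succ y)\prec z=x\succ(y\prec z)$, $(x\mu y)\mu z=x\mu(y\mu z)$, $(x\succ y)\mu z=x\succ(y\mu z)$, $(x\prec y)\mu z=x\mu(y\succ z)$, $(x\mu y)\prec z=x\mu(y\prec z)$, $(x\odot y)\odot z=x\odot(y\odot z)$, $(x\prec y)\prec z=x\prec(y\odot z)$, $(x\odot y)\succ z=x\succ(y\succ z)$). A tree of $\mathcal{G}_4$ is canonical if it contains none of the right-hand-side patterns,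 i.e. there is no internal node labelled $a$ whose right child is an internal node labelled $b$ for $(a,b)\in\{(\succ,\prec),(\mu,\mu),(\succ,\mu),(\mu,\succ),(\mu,\prec),(\odot,\odot),(\prec,\odot),(\succ,\succ)\}$. *)

theory Defs
  imports Main
begin

text \<open>The four binary generators: Lt = \<prec>, Mu = \<mu> (circle), Gt = \<succ>, Od = \<odot>.\<close>
datatype gen = Lt | Mu | Gt | Od

text \<open>Elements of the free set-operad G4: planar binary trees with internal
nodes labelled by generators; the arity is the number of leaves.\<close>
datatype tree = Leaf | Node gen tree tree

fun leaves :: "tree \<Rightarrow> nat" where
  "leaves Leaf = 1"
| "leaves (Node g l r) = leaves l + leaves r"

text \<open>Partial composition: graft x i y = x \<circ>_i y, substituting y into the
i-th leaf of x (leaves numbered 1,2,... from left to right).\<close>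
fun graft :: "tree \<Rightarrow> nat \<Rightarrow> tree \<Rightarrow> tree" where
  "graft Leaf i y = (if i = 1 then y else Leaf)"
| "graft (Node g l r) i y =
     (if i \<le> leaves l then Node g (graft l i y) r
      else Node g l (graft r (i - leaves l) y))"

definition comp1 :: "gen \<Rightarrow> gen \<Rightarrow> tree" where
  "comp1 a b = Node a (Node b Leaf Leaf) Leaf"
definition comp2 :: "gen \<Rightarrow> gen \<Rightarrow> tree" where
  "comp2 a b = Node a Leaf (Node b Leaf Leaf)"

definition relations :: "(tree \<times> tree) set" where
  "relations = {
     (comp1 Lt Gt, comp2 Gt Lt),
     (comp1 Mu Mu, comp2 Mu Mu),
     (comp1 Mu Gt, comp2 Gt Mu),
     (comp1 Mu Lt, comp2 Mu Gt),
     (comp1 Lt Mu, comp2 Mu Lt),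
     (comp1 Od Od, comp2 Od Od),
     (comp1 Lt Lt, comp2 Lt Od),
     (comp1 Gt Od, comp2 Gt Gt)}"

inductive gr4_cong :: "tree \<Rightarrow> tree \<Rightarrow> bool" where
  base: "(x, y) \<in> relations \<Longrightarrow> gr4_cong x y"
| refl: "gr4_cong x x"
| sym: "gr4_cong x y \<Longrightarrow> gr4_cong y x"
| trans: "gr4_cong x y \<Longrightarrow> gr4_cong y z \<Longrightarrow> gr4_cong x z"
| comp: "gr4_cong x x' \<Longrightarrow> gr4_cong y y' \<Longrightarrow> 1 \<le> i \<Longrightarrow> i \<le> leaves x \<Longrightarrow>
         gr4_cong (graft x i y) (graft x' i y')"

text \<open>Forbidden right-hand-side patterns (a, b): node a with right child node b.\<close>
definition forbidden :: "(gen \<times> gen) set" where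
  "forbidden = {(Gt, Lt), (Mu, Mu), (Gt, Mu), (Mu, Gt), (Mu, Lt), (Od, Od), (Lt, Od), (Gt, Gt)}"

fun canonical :: "tree \<Rightarrow> bool" where
  "canonical Leaf = True"
| "canonical (Node a l r) =
     (canonical l \<and> canonical r \<and>
      (case r of Leaf \<Rightarrow> True | Node b _ _ \<Rightarrow> (a, b) \<notin> forbidden))"

end

theory Submission
  imports Defs
begin

definition rl :: "gen \<Rightarrow> gen \<Rightarrow> (gen \<times> gen) option" where
  "rl a b = (case (a, b) of
      (Gt, Lt) \<Rightarrow> Some (Lt, Gt)
    | (Mu, Mu) \<Rightarrow> Some (Mu, Mu)
    | (Gt, Mu) \<Rightarrow> Some (Mu, Gt)
    | (Mu, Gt) \<Rightarrow> Some (Mu, Lt)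
    | (Mu, Lt) \<Rightarrow> Some (Lt, Mu)
    | (Od, Od) \<Rightarrow> Some (Od, Od)
    | (Lt, Od) \<Rightarrow> Some (Lt, Lt)
    | (Gt, Gt) \<Rightarrow> Some (Gt, Od)
    | _ \<Rightarrow> None)"

lemma rl_forbidden: "(rl a b \<noteq> None) = ((a, b) \<in> forbidden)"
  by (cases a; cases b; simp add: rl_def forbidden_def)

inductive step :: "tree \<Rightarrow> tree \<Rightarrow> bool" where
  root: "rl a b = Some (a', b') \<Longrightarrow> step (Node a x (Node b y z)) (Node a' (Node b' x y) z)"
| left: "step l l' \<Longrightarrow> step (Node a l r) (Node a l' r)"
| right: "step r r' \<Longrightarrow> step (Node a l r) (Node a l r')"

inductive_cases stepE: "step t t'"
inductive_cases stepLeafE[elim!]: "step Leaf t'"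
inductive_cases stepNodeE: "step (Node a l r) t'"

lemma leaves_pos: "leaves t > 0"
  by (induction t) auto

lemma step_leaves: "step t t' \<Longrightarrow> leaves t' = leaves t"
  by (induction rule: step.induct) auto

fun msr :: "tree \<Rightarrow> nat" where
  "msr Leaf = 0"
| "msr (Node a l r) = msr l + msr r + leaves r"

lemma step_msr: "step t t' \<Longrightarrow> msr t' < msr t"
  by (induction rule: step.induct) (auto simp: step_leaves leaves_pos)

lemma canonical_iff: "canonical t = (\<forall>t'. \<not> step t t')"
proof (induction t)
  case Leaf
  then show ?case by auto
next
  case (Node a l r)
  show ?case
  proof (cases r)
    case Leaf
    then show ?thesis using Node
      by (auto elim: stepNodeE intro: step.intros)
  next
    case (Node b y z)
    show ?thesis
    proof
      assume c: "canonical (Node a l r)"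
      show "\<forall>t'. \<not> step (Node a l r) t'"
      proof (intro allI notI)
        fix t' assume "step (Node a l r) t'"
        then show False using c Node.IH Node rl_forbidden
          by (cases rule: stepNodeE) (auto, metis)
      qed
    next
      assume n: "\<forall>t'. \<not> step (Node a l r) t'"
      have "canonical l" using n Node.IH by (auto intro: step.left)
      moreover have "canonical r" using n Node.IH by (auto intro: step.right)
      moreover have "(a, b) \<notin> forbidden"
      proof
        assume "(a, b) \<in> forbidden"
        then obtain a' b' where "rl a b = Some (a', b')" using rl_forbidden by fastforce
        then show False using n \<open>r = Node b y z\<close> by (auto intro: step.root)
      qed
      ultimately show "canonical (Node a l r)" using \<open>r = Node b y z\<close> by simp
    qed
  qed
qed

definition join :: "tree \<Rightarrow> tree \<Rightarrow> bool" where
  "join s t = (\<exists>u. step\<^sup>*\<^sup>* s u \<and> step\<^sup>*\<^sup>* t u)"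

lemma critical:
  "rl a b = Some (a', b') \<Longrightarrow> rl b c = Some (c', c'') \<Longrightarrow>
   \<exists>a3 b3 b5. rl a' c = Some (a3, b3) \<and> rl a c' = Some (a3, b5) \<and> rl b5 c'' = Some (b3, b')"
  by (cases a; cases b; cases c; auto simp: rl_def)

lemma step_left_rt: "step\<^sup>*\<^sup>* l l' \<Longrightarrow> step\<^sup>*\<^sup>* (Node a l r) (Node a l' r)"
  by (induction rule: rtranclp_induct) (auto intro: step.left rtranclp.rtrancl_into_rtrancl)

lemma step_right_rt: "step\<^sup>*\<^sup>* r r' \<Longrightarrow> step\<^sup>*\<^sup>* (Node a l r) (Node a l r')"
  by (induction rule: rtranclp_induct) (auto intro: step.right rtranclp.rtrancl_into_rtrancl)

lemma root_lc:
  assumes r: "rl a b = Some (a', b')" and s: "step (Node a x (Node b y z)) t2"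
  shows "join (Node a' (Node b' x y) z) t2"
proof -
  from s consider (R) a2 b2 where "t2 = Node a2 (Node b2 x y) z" "rl a b = Some (a2, b2)"
    | (L) x2 where "t2 = Node a x2 (Node b y z)" "step x x2"
    | (RR) c c' c'' u v where "z = Node c u v" "t2 = Node a x (Node c' (Node c'' y u) v)" "rl b c = Some (c', c'')"
    | (RL) y2 where "t2 = Node a x (Node b y2 z)" "step y y2"
    | (RRt) z2 where "t2 = Node a x (Node b y z2)" "step z z2"
    by (elim stepNodeE) (auto elim: stepNodeE)
  then show ?thesis
  proof cases
    case R
    then show ?thesis using r by (auto simp: join_def)
  next
    case L
    then show ?thesis unfolding join_def
      by (metis r step.left step.root r_into_rtranclp)
  next
    case RR
    obtain a3 b3 b5 where h: "rl a' c = Some (a3, b3)" "rl a c' = Some (a3, b5)" "rl b5 c'' = Some (b3, b')"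
      using critical[OF r RR(3)] by blast
    have s1: "step (Node a' (Node b' x y) z) (Node a3 (Node b3 (Node b' x y) u) v)"
      using h(1) RR by (auto intro: step.root)
    have s2: "step t2 (Node a3 (Node b5 x (Node c'' y u)) v)"
      using h(2) RR by (auto intro: step.root)
    have s3: "step (Node a3 (Node b5 x (Node c'' y u)) v) (Node a3 (Node b3 (Node b' x y) u) v)"
      using h(3) by (auto intro: step.root step.left)
    show ?thesis unfolding join_def using s1 s2 s3
      by (meson r_into_rtranclp rtranclp.rtrancl_into_rtrancl rtranclp.rtrancl_refl)
  next
    case RL
    have "step (Node a' (Node b' x y) z) (Node a' (Node b' x y2) z)"
      using RL by (intro step.left step.right)
    moreover have "step t2 (Node a' (Node b' x y2) z)" using RL r by (auto intro: step.root)
    ultimately show ?thesis unfolding join_def by blast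
  next
    case RRt
    then show ?thesis unfolding join_def
      by (metis r step.right step.root r_into_rtranclp)
  qed
qed

lemma join_sym: "join s t \<Longrightarrow> join t s"
  unfolding join_def by blast

lemma stepNode_cases:
  assumes "step (Node a l r) t2"
  obtains (R) b a2 b2 y z where "r = Node b y z" "t2 = Node a2 (Node b2 l y) z" "rl a b = Some (a2, b2)"
    | (L) l2 where "t2 = Node a l2 r" "step l l2"
    | (Rt) r2 where "t2 = Node a l r2" "step r r2"
  using assms by (elim stepNodeE) auto

lemma local_conf: "step t t1 \<Longrightarrow> step t t2 \<Longrightarrow> join t1 t2"
proof (induction t t1 arbitrary: t2 rule: step.induct)
  case (root a b a' b' x y z)
  then show ?case using root_lc by blast
next
  case (left l l' a r)
  from left.prems show ?case
  proof (cases rule: stepNode_cases)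
    case (R b a2 b2 y z)
    then show ?thesis using root_lc join_sym step.left[OF left.hyps] by metis
  next
    case (L l2)
    then obtain u where "step\<^sup>*\<^sup>* l' u" "step\<^sup>*\<^sup>* l2 u" using left.IH unfolding join_def by blast
    then show ?thesis using L unfolding join_def by (blast intro: step_left_rt)
  next
    case (Rt r2)
    then show ?thesis unfolding join_def using left.hyps
      by (meson r_into_rtranclp step.left step.right)
  qed
next
  case (right r r' a l)
  from right.prems show ?case
  proof (cases rule: stepNode_cases)
    case (R b a2 b2 y z)
    then show ?thesis using root_lc join_sym step.right[OF right.hyps] by metis
  next
    case (L l2)
    then show ?thesis unfolding join_def using right.hyps
      by (meson r_into_rtranclp step.left step.right)
  next
    case (Rt r2)
    then obtain u where "step\<^sup>*\<^sup>* r' u" "step\<^sup>*\<^sup>* r2 u" using right.IH unfolding join_def by blast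
    then show ?thesis using Rt unfolding join_def by (blast intro: step_right_rt)
  qed
qed

lemma confluence: "step\<^sup>*\<^sup>* x y \<Longrightarrow> step\<^sup>*\<^sup>* x z \<Longrightarrow> join y z"
proof (induction "msr x" arbitrary: x y z rule: less_induct)
  case less
  show ?case
  proof (cases "x = y")
    case True
    then show ?thesis using less.prems unfolding join_def by blast
  next
    case False
    then obtain y1 where y1: "step x y1" "step\<^sup>*\<^sup>* y1 y"
      using less.prems(1) by (metis converse_rtranclpE)
    show ?thesis
    proof (cases "x = z")
      case True
      then show ?thesis using less.prems unfolding join_def by blast
    next
      case False
      then obtain z1 where z1: "step x z1" "step\<^sup>*\<^sup>* z1 z"
        using less.prems(2) by (metis converse_rtranclpE)
      obtain u where u: "step\<^sup>*\<^sup>* y1 u" "step\<^sup>*\<^sup>* z1 u"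
        using local_conf[OF y1(1) z1(1)] unfolding join_def by blast
      obtain v where v: "step\<^sup>*\<^sup>* y v" "step\<^sup>*\<^sup>* u v"
        using less.hyps[OF step_msr[OF y1(1)] y1(2) u(1)] unfolding join_def by blast
      have "step\<^sup>*\<^sup>* z1 v" using u(2) v(2) by auto
      then obtain w where w: "step\<^sup>*\<^sup>* v w" "step\<^sup>*\<^sup>* z w"
        using less.hyps[OF step_msr[OF z1(1)] _ z1(2)] unfolding join_def by blast
      show ?thesis unfolding join_def using v(1) w by (meson rtranclp_trans)
    qed
  qed
qed

abbreviation conv :: "tree \<Rightarrow> tree \<Rightarrow> bool" where
  "conv \<equiv> (\<lambda>x y. step x y \<or> step y x)\<^sup>*\<^sup>*"

lemma church_rosser: "conv x y \<Longrightarrow> join x y"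
proof (induction rule: rtranclp_induct)
  case base
  then show ?case unfolding join_def by blast
next
  case (step y z)
  then obtain u where u: "step\<^sup>*\<^sup>* x u" "step\<^sup>*\<^sup>* y u" unfolding join_def by blast
  from step(2) show ?case
  proof
    assume "step y z"
    then obtain w where "step\<^sup>*\<^sup>* u w" "step\<^sup>*\<^sup>* z w"
      using confluence[OF u(2), of z] unfolding join_def by blast
    then show ?thesis using u unfolding join_def by (meson rtranclp_trans)
  next
    assume "step z y"
    then show ?thesis using u unfolding join_def
      by (meson converse_rtranclp_into_rtranclp)
  qed
qed

lemma conv_leaves: "conv x y \<Longrightarrow> leaves y = leaves x"
  by (induction rule: rtranclp_induct) (auto simp: step_leaves)

lemma step_graft1: "step x x' \<Longrightarrow> 1 \<le> i \<Longrightarrow> i \<le> leaves x \<Longrightarrow> step (graft x i y) (graft x' i y)"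
proof (induction x x' arbitrary: i rule: step.induct)
  case (root a b a' b' x1 y1 z1)
  then show ?case by (auto intro: step.root simp: leaves_pos)
next
  case (left l l' a r)
  then show ?case by (auto intro: step.left simp: step_leaves)
next
  case (right r r' a l)
  then show ?case by (auto intro: step.right simp: step_leaves)
qed

lemma step_graft2: "step y y' \<Longrightarrow> 1 \<le> i \<Longrightarrow> i \<le> leaves x \<Longrightarrow> step (graft x i y) (graft x i y')"
proof (induction x arbitrary: i)
  case Leaf
  then show ?case by auto
next
  case (Node a l r)
  then show ?case by (auto intro: step.left step.right)
qed

lemma conv_graft1: "conv x x' \<Longrightarrow> 1 \<le> i \<Longrightarrow> i \<le> leaves x \<Longrightarrow> conv (graft x i y) (graft x' i y)"
proof (induction rule: rtranclp_induct)
  case base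
  then show ?case by simp
next
  case (step x1 x2)
  have "leaves x1 = leaves x" using step(1) conv_leaves by simp
  then have d: "step (graft x1 i y) (graft x2 i y) \<or> step (graft x2 i y) (graft x1 i y)"
    using step step_graft1 step_leaves by metis
  have ih: "conv (graft x i y) (graft x1 i y)" using step by simp
  show ?case by (rule rtranclp.rtrancl_into_rtrancl[OF ih]) (use d in simp)
qed

lemma conv_graft2: "conv y y' \<Longrightarrow> 1 \<le> i \<Longrightarrow> i \<le> leaves x \<Longrightarrow> conv (graft x i y) (graft x i y')"
proof (induction rule: rtranclp_induct)
  case base
  then show ?case by simp
next
  case (step y1 y2)
  then have d: "step (graft x i y1) (graft x i y2) \<or> step (graft x i y2) (graft x i y1)"
    using step_graft2 by metis
  have ih: "conv (graft x i y) (graft x i y1)" using step by simp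
  show ?case by (rule rtranclp.rtrancl_into_rtrancl[OF ih]) (use d in simp)
qed

lemma rel_step: "(x, y) \<in> relations \<Longrightarrow> step y x"
  unfolding relations_def comp1_def comp2_def
  by (elim insertE emptyE; simp; rule step.root; simp add: rl_def)

lemma conv_sym: "conv x y \<Longrightarrow> conv y x"
  by (induction rule: rtranclp_induct) (auto intro: converse_rtranclp_into_rtranclp)

lemma cong_conv: "gr4_cong x y \<Longrightarrow> conv x y"
proof (induction rule: gr4_cong.induct)
  case (base x y)
  then have "step y x" by (rule rel_step)
  then show ?case by (rule r_into_rtranclp[where r="\<lambda>x y. step x y \<or> step y x", OF disjI2])
next
  case (refl x)
  then show ?case by simp
next
  case (sym x y)
  from sym.IH show ?case by (rule conv_sym)
next
  case (trans x y z)
  from trans.IH show ?case by (rule rtranclp_trans)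
next
  case (comp x x' y y' i)
  have 1: "conv (graft x i y) (graft x' i y)" using conv_graft1[OF comp.IH(1) comp.hyps(3,4)] .
  have "leaves x' = leaves x" using conv_leaves[OF comp.IH(1)] .
  then have 2: "conv (graft x' i y) (graft x' i y')"
    using conv_graft2[OF comp.IH(2) comp.hyps(3), of x'] comp.hyps(4) by simp
  from 1 2 show ?case by (rule rtranclp_trans)
qed

lemma rl_rel: "rl a b = Some (a', b') \<Longrightarrow> (comp1 a' b', comp2 a b) \<in> relations"
  unfolding relations_def
  by (cases a; cases b; simp add: rl_def; auto)

lemma g2: "graft (graft (graft (comp2 a b) 3 z) 2 y) 1 x = Node a x (Node b y z)"
  by (simp add: comp2_def)
lemma g1: "graft (graft (graft (comp1 a b) 3 z) 2 y) 1 x = Node a (Node b x y) z"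
  by (simp add: comp1_def)
lemma l3: "leaves (comp2 a b) = 3" by (simp add: comp2_def)
lemma l2: "2 \<le> leaves (graft (comp2 a b) 3 z)" by (simp add: comp2_def leaves_pos)
lemma l1: "1 \<le> leaves (graft (graft (comp2 a b) 3 z) 2 y)" by (simp add: comp2_def leaves_pos)

lemma step_cong: "step x y \<Longrightarrow> gr4_cong x y"
proof (induction rule: step.induct)
  case (root a b a' b' x y z)
  have b: "gr4_cong (comp2 a b) (comp1 a' b')"
    by (rule gr4_cong.sym, rule gr4_cong.base, rule rl_rel[OF root])
  have c3: "gr4_cong (graft (comp2 a b) 3 z) (graft (comp1 a' b') 3 z)"
    using gr4_cong.comp[OF b gr4_cong.refl[of z], of 3] l3 by simp
  have c2: "gr4_cong (graft (graft (comp2 a b) 3 z) 2 y) (graft (graft (comp1 a' b') 3 z) 2 y)"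
    using gr4_cong.comp[OF c3 gr4_cong.refl[of y], of 2] l2 by simp
  have c1: "gr4_cong (graft (graft (graft (comp2 a b) 3 z) 2 y) 1 x)
        (graft (graft (graft (comp1 a' b') 3 z) 2 y) 1 x)"
    using gr4_cong.comp[OF c2 gr4_cong.refl[of x], of 1] l1 by simp
  then show ?case unfolding g1 g2 .
next
  case (left l l' a r)
  have "gr4_cong (graft (Node a Leaf r) 1 l) (graft (Node a Leaf r) 1 l')"
    using gr4_cong.comp[OF gr4_cong.refl left.IH, of 1 "Node a Leaf r"] by simp
  then show ?case by simp
next
  case (right r r' a l)
  have "gr4_cong (graft (Node a l Leaf) (leaves l + 1) r) (graft (Node a l Leaf) (leaves l + 1) r')"
    using gr4_cong.comp[OF gr4_cong.refl right.IH, of "leaves l + 1" "Node a l Leaf"] by simp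
  then show ?case by simp
qed

lemma rt_cong: "step\<^sup>*\<^sup>* x y \<Longrightarrow> gr4_cong x y"
proof (induction rule: rtranclp_induct)
  case base
  then show ?case by (rule gr4_cong.refl)
next
  case (step y z)
  then show ?case using gr4_cong.trans step_cong by blast
qed

lemma exists_nf: "\<exists>c. step\<^sup>*\<^sup>* t c \<and> canonical c"
proof (induction "msr t" arbitrary: t rule: less_induct)
  case less
  show ?case
  proof (cases "canonical t")
    case True
    then show ?thesis by blast
  next
    case False
    then obtain t' where t': "step t t'" using canonical_iff by blast
    then obtain c where "step\<^sup>*\<^sup>* t' c" "canonical c" using less step_msr by blast
    then show ?thesis using t' converse_rtranclp_into_rtranclp by metis
  qed
qed

lemma nf_rt: "canonical c \<Longrightarrow> step\<^sup>*\<^sup>* c u \<Longrightarrow> u = c"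
  using canonical_iff by (metis converse_rtranclpE)

theorem mainTheorem3:
  shows "\<forall>t. \<exists>!c. canonical c \<and> gr4_cong t c"
proof
  fix t
  obtain c where c: "step\<^sup>*\<^sup>* t c" "canonical c" using exists_nf by blast
  show "\<exists>!c. canonical c \<and> gr4_cong t c"
  proof (rule ex1I[of _ c])
    show "canonical c \<and> gr4_cong t c" using c rt_cong by blast
  next
    fix d assume d: "canonical d \<and> gr4_cong t d"
    have "gr4_cong c t" using c rt_cong gr4_cong.sym by blast
    then have "gr4_cong c d" using d gr4_cong.trans by blast
    then have "join c d" using cong_conv church_rosser by blast
    then show "d = c" using nf_rt c(2) d unfolding join_def by metis
  qed
qed

end
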